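(* Let $l\in\mathbb N_0$ and assume $x_1^{2l+1}\ne0$, $x_2^2\ne0$, $y_{l+1}\ne0$ in $\mathfrak B(V)$, and that $y_{l+1}y_l$ lies in the linear span of $\{y_ry_s:0\le r\le s\}$. Then $q_{11}^{l(l+1)}\widetilde q_{12}^{\,l+1}q_{22}=1$ and $y_{l+1}y_l=q_{11}^{l(l+1)}q_{12}^{l+1}q_{21}^{l}q_{22}\,y_ly_{l+1}$.
   Context: $\Bbbk$ algebraically closed of characteristic $0$. $V$ is braided of diagonal type with basis $x_1,x_2$, $c(x_i\otimes x_j)=q_{ij}x_j\otimes x_i$, $q_{ij}\in\Bbbk^\times$, $q_{ii}\ne1$, $\widetilde q_{12}=q_{12}q_{21}$; $\mathfrak B(V)$ is its Nichols algebra. $y_0=x_2$, $y_{k+1}=x_1y_k-q_{11}^kq_{12}y_kx_1$ (i.e. $y_k=(\mathrm{ad}_cx_1)^kx_2$). *)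

theory Defs
  imports "HOL-Computational_Algebra.Polynomial"
begin

text \<open>Tensor algebra T(V) of V with basis x_1, x_2, modelled as coefficient
functions on words (lists of letters 1,2).  Products are convolution over
splittings of a word, so they are always finite sums.\<close>

type_synonym 'k tens = "nat list \<Rightarrow> 'k"

definition tone :: "'k::field tens" where
  "tone = (\<lambda>w. if w = [] then 1 else 0)"

definition tgen :: "nat \<Rightarrow> 'k::field tens" where
  "tgen i = (\<lambda>w. if w = [i] then 1 else 0)"

definition tadd :: "'k::field tens \<Rightarrow> 'k tens \<Rightarrow> 'k tens" where
  "tadd f g = (\<lambda>w. f w + g w)"

definition tsub :: "'k::field tens \<Rightarrow> 'k tens \<Rightarrow> 'k tens" where
  "tsub f g = (\<lambda>w. f w - g w)"

definition tsmult :: "'k::field \<Rightarrow> 'k tens \<Rightarrow> 'k tens" where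
  "tsmult c f = (\<lambda>w. c * f w)"

definition tmult :: "'k::field tens \<Rightarrow> 'k tens \<Rightarrow> 'k tens" where
  "tmult f g = (\<lambda>w. \<Sum>k\<le>length w. f (take k w) * g (drop k w))"

fun tpow :: "'k::field tens \<Rightarrow> nat \<Rightarrow> 'k tens" where
  "tpow f 0 = tone"
| "tpow f (Suc n) = tmult f (tpow f n)"

text \<open>Skew derivation \<partial>_i, determined by \<partial>_i(x_j) = \<delta>_ij and
\<partial>_i(uv) = u \<partial>_i(v) + \<partial>_i(u) K_i(v), with K_i(x_j) = q_ij x_j.\<close>

definition tder :: "(nat \<Rightarrow> nat \<Rightarrow> 'k::field) \<Rightarrow> nat \<Rightarrow> 'k tens \<Rightarrow> 'k tens" where
  "tder q i f = (\<lambda>w. \<Sum>k\<le>length w.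
      f (take k w @ i # drop k w) * (\<Prod>a\<leftarrow>drop k w. q i a))"

text \<open>An element of T(V) is zero in the Nichols algebra B(V) iff it lies in the
Nichols ideal, i.e. iff every iterated skew derivative has vanishing constant
term (radical of the canonical Hopf pairing).\<close>

definition nichols_zero :: "(nat \<Rightarrow> nat \<Rightarrow> 'k::field) \<Rightarrow> 'k tens \<Rightarrow> bool" where
  "nichols_zero q f \<longleftrightarrow> (\<forall>w\<in>lists {1,2}. foldr (tder q) w f [] = 0)"

fun yy :: "(nat \<Rightarrow> nat \<Rightarrow> 'k::field) \<Rightarrow> nat \<Rightarrow> 'k tens" where
  "yy q 0 = tgen 2"
| "yy q (Suc k) = tsub (tmult (tgen 1) (yy q k))
                       (tsmult (q 1 1 ^ k * q 1 2) (tmult (yy q k) (tgen 1)))"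

end

theory Submission
  imports Defs
begin


definition shift :: "'k::field tens \<Rightarrow> nat \<Rightarrow> 'k tens" where
  "shift f a = (\<lambda>u. f (a # u))"

definition tK :: "(nat \<Rightarrow> nat \<Rightarrow> 'k::field) \<Rightarrow> nat \<Rightarrow> 'k tens \<Rightarrow> 'k tens" where
  "tK q i f = (\<lambda>w. f w * (\<Prod>a\<leftarrow>w. q i a))"

lemma M0: "tmult f g [] = f [] * g []"
  by (simp add: tmult_def)

lemma M2: "tmult f g (a # w) = f [] * g (a # w) + tmult (shift f a) g w"
  unfolding tmult_def shift_def
  by (simp add: sum.atMost_Suc_shift del: sum.atMost_Suc)

lemma D0: "tder q i f [] = f [i]"
  by (simp add: tder_def)

lemma D2: "tder q i f (a # w) = f (i # a # w) * (\<Prod>x\<leftarrow>a # w. q i x) + tder q i (shift f a) w"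
  unfolding tder_def shift_def
  by (simp add: sum.atMost_Suc_shift del: sum.atMost_Suc)

lemma tder_add: "tder q i (\<lambda>u. f u + g u) w = tder q i f w + tder q i g w"
  unfolding tder_def by (simp add: sum.distrib distrib_right)

lemma tder_cmult: "tder q i (\<lambda>u. c * f u) w = c * tder q i f w"
  unfolding tder_def by (simp add: sum_distrib_left mult.assoc)

lemma tmult_addL: "tmult (\<lambda>u. f u + g u) h w = tmult f h w + tmult g h w"
  unfolding tmult_def by (simp add: sum.distrib distrib_right)

lemma tmult_prodL:
  "tmult (\<lambda>u. f u * (\<Prod>x\<leftarrow>a # u. q i x)) (tK q i g) w = (\<Prod>x\<leftarrow>a # w. q i x) * tmult f g w"
proof -
  have "\<And>k. (\<Prod>x\<leftarrow>a # take k w. q i x) * (\<Prod>x\<leftarrow>drop k w. q i x) = (\<Prod>x\<leftarrow>a # w. q i x)"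
    by (metis append_take_drop_id map_append prod_list.append append_Cons)
  then show ?thesis
    unfolding tmult_def tK_def sum_distrib_left
    by (intro sum.cong refl) (metis (no_types, lifting) mult.assoc mult.commute)
qed

lemma leibniz:
  "tder q i (tmult f g) w = tmult f (tder q i g) w + tmult (tder q i f) (tK q i g) w"
proof (induction w arbitrary: f)
  case Nil
  show ?case by (simp add: D0 M0 M2 tK_def shift_def)
next
  case (Cons a w)
  let ?P = "\<lambda>v. (\<Prod>x\<leftarrow>v. q i x)"
  have sh: "shift (tmult f g) a = (\<lambda>u. f [] * shift g a u + tmult (shift f a) g u)"
    by (simp add: shift_def M2)
  have shd: "shift (tder q i f) a = (\<lambda>u. f (i # a # u) * ?P (a # u) + tder q i (shift f a) u)"
    by (simp add: shift_def D2)
  have "tder q i (tmult f g) (a # w) = tmult f g (i # a # w) * ?P (a # w) + tder q i (shift (tmult f g) a) w"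
    by (rule D2)
  also have "tder q i (shift (tmult f g) a) w = f [] * tder q i (shift g a) w + tder q i (tmult (shift f a) g) w"
    by (simp add: sh tder_add tder_cmult)
  also have "tder q i (tmult (shift f a) g) w = tmult (shift f a) (tder q i g) w + tmult (tder q i (shift f a)) (tK q i g) w"
    by (rule Cons.IH)
  also have "tmult f g (i # a # w) = f [] * g (i # a # w) + f [i] * g (a # w) + tmult (shift (shift f i) a) g w"
    by (simp add: M2 shift_def)
  finally have L: "tder q i (tmult f g) (a # w) = (f [] * g (i # a # w) + f [i] * g (a # w) + tmult (shift (shift f i) a) g w) * ?P (a # w) +
    (f [] * tder q i (shift g a) w + (tmult (shift f a) (tder q i g) w + tmult (tder q i (shift f a)) (tK q i g) w))" .
  have R1: "tmult f (tder q i g) (a # w) = f [] * (g (i # a # w) * ?P (a # w) + tder q i (shift g a) w) + tmult (shift f a) (tder q i g) w"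
    by (simp add: M2 D2)
  have "tmult (tder q i f) (tK q i g) (a # w) = f [i] * (g (a # w) * ?P (a # w)) + tmult (shift (tder q i f) a) (tK q i g) w"
    by (simp add: M2 D0 tK_def)
  also have "tmult (shift (tder q i f) a) (tK q i g) w = ?P (a # w) * tmult (shift (shift f i) a) g w + tmult (tder q i (shift f a)) (tK q i g) w"
    unfolding shd tmult_addL
    by (subst tmult_prodL[symmetric]) (simp add: shift_def)
  finally have R2: "tmult (tder q i f) (tK q i g) (a # w) = f [i] * (g (a # w) * ?P (a # w)) + (?P (a # w) * tmult (shift (shift f i) a) g w + tmult (tder q i (shift f a)) (tK q i g) w)" .
  show ?case unfolding L R1 R2 by (simp add: algebra_simps)
qed

lemma tder_sub: "tder q i (\<lambda>u. f u - g u) w = tder q i f w - tder q i g w"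
  unfolding tder_def by (simp add: sum_subtractf left_diff_distrib)

lemma tder_zero: "tder q i (\<lambda>u. 0) w = 0"
  unfolding tder_def by simp

lemma tder_sum: "tder q i (\<lambda>u. \<Sum>p\<in>S. h p u) w = (\<Sum>p\<in>S. tder q i (h p) w)"
  unfolding tder_def by (simp add: sum_distrib_right sum.swap[of _ S])

lemma tmult_addR: "tmult h (\<lambda>u. f u + g u) w = tmult h f w + tmult h g w"
  unfolding tmult_def by (simp add: sum.distrib distrib_left)
lemma tmult_subL: "tmult (\<lambda>u. f u - g u) h w = tmult f h w - tmult g h w"
  unfolding tmult_def by (simp add: sum_subtractf left_diff_distrib)
lemma tmult_subR: "tmult h (\<lambda>u. f u - g u) w = tmult h f w - tmult h g w"
  unfolding tmult_def by (simp add: sum_subtractf right_diff_distrib)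
lemma tmult_cmultL: "tmult (\<lambda>u. c * f u) h w = c * tmult f h w"
  unfolding tmult_def by (simp add: sum_distrib_left mult.assoc)
lemma tmult_cmultR: "tmult h (\<lambda>u. c * f u) w = c * tmult h f w"
  unfolding tmult_def by (simp add: sum_distrib_left algebra_simps)
lemma tmult_zeroL: "tmult (\<lambda>u. 0) h w = 0"
  unfolding tmult_def by simp
lemma tmult_zeroR: "tmult h (\<lambda>u. 0) w = 0"
  unfolding tmult_def by simp

lemma tmult_oneL: "tmult tone g w = g w"
  by (cases w) (simp_all add: M0 M2 tone_def shift_def tmult_zeroL)

lemma tmult_oneR: "tmult f tone w = f w"
proof (induction w arbitrary: f)
  case Nil then show ?case by (simp add: M0 tone_def)
next
  case (Cons a w) then show ?case by (simp add: M2 tone_def shift_def)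
qed

lemma tK_mult: "tK q i (tmult f g) w = tmult (tK q i f) (tK q i g) w"
proof -
  have "\<And>k. (\<Prod>x\<leftarrow>take k w. q i x) * (\<Prod>x\<leftarrow>drop k w. q i x) = (\<Prod>x\<leftarrow>w. q i x)"
    by (metis append_take_drop_id map_append prod_list.append)
  then show ?thesis
    unfolding tmult_def tK_def sum_distrib_right
    by (intro sum.cong refl) (metis (no_types, lifting) mult.assoc mult.commute)
qed

lemma tder_tgen: "tder q i (tgen j) = (\<lambda>w. if i = j then tone w else 0)"
proof
  fix w
  show "tder q i (tgen j) w = (if i = j then tone w else 0)"
  proof (cases w)
    case Nil then show ?thesis by (simp add: D0 tgen_def tone_def)
  next
    case (Cons a v)
    have "\<And>k. take k w @ i # drop k w \<noteq> [j]"
    proof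
      fix k assume "take k w @ i # drop k w = [j]"
      then have "length (take k w @ i # drop k w) = 1" by simp
      then show False using Cons by (auto simp: min_def split: if_splits)
    qed
    then show ?thesis using Cons by (simp add: tder_def tgen_def tone_def)
  qed
qed

lemma tder_tone: "tder q i tone = (\<lambda>w. 0)"
  by (rule ext) (simp add: tder_def tone_def)

lemma tK_tgen: "tK q i (tgen j) = (\<lambda>w. q i j * tgen j w)"
  by (rule ext) (simp add: tK_def tgen_def)

definition X :: "nat \<Rightarrow> 'k::field tens" where "X p = tpow (tgen 1) p"

lemma tgen_nil: "tgen j [] = 0"
  by (simp add: tgen_def)

lemma X_expl: "X p w = (if w = replicate p 1 then 1 else 0)"
proof (induction p arbitrary: w)
  case 0 then show ?case by (simp add: X_def tone_def)
next
  case (Suc p)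
  have sh: "shift (tgen 1) a = (\<lambda>u. if a = 1 then tone u else 0)" for a :: nat
    by (rule ext) (simp add: shift_def tgen_def tone_def)
  show ?case
  proof (cases w)
    case Nil then show ?thesis by (simp add: X_def M0 tgen_def)
  next
    case (Cons a v)
    have "X (Suc p) w = tmult (tgen 1) (X p) w" by (simp add: X_def)
    also have "\<dots> = tmult (shift (tgen 1) a) (X p) v"
      using Cons by (simp add: M2 tgen_nil)
    also have "\<dots> = (if a = 1 then X p v else 0)"
      unfolding sh by (cases "a = 1") (simp_all add: tmult_oneL tmult_zeroL)
    finally show ?thesis using Cons Suc.IH by (cases "a = 1") auto
  qed
qed

lemma X_Suc: "X (Suc p) = tmult (tgen 1) (X p)"
  by (simp add: X_def)

lemma X_nil: "X p [] = (if p = 0 then 1 else 0)"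
  by (simp add: X_expl)

lemma X_Cons: "X (Suc p) (a # v) = (if a = 1 then X p v else 0)" "X 0 (a # v) = 0"
  by (simp_all add: X_expl)

lemma X_mult: "tmult (X m) (X n) w = X (m + n) w"
proof (induction m arbitrary: w)
  case 0 then show ?case by (simp add: X_def tmult_oneL)
next
  case (Suc m)
  have sh: "shift (X (Suc m)) a = (\<lambda>u. if a = 1 then X m u else 0)" for a :: nat
    by (rule ext) (simp add: shift_def X_expl)
  show ?case
  proof (cases w)
    case Nil then show ?thesis by (simp add: M0 X_nil)
  next
    case (Cons a v)
    show ?thesis using Cons Suc.IH
      by (cases "a = 1") (simp_all add: M2 X_nil sh tmult_zeroL X_Cons)
  qed
qed

lemma tK_X: "tK q i (X m) = (\<lambda>w. q i 1 ^ m * X m w)"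
  by (rule ext) (simp add: tK_def X_expl)

definition qn :: "(nat \<Rightarrow> nat \<Rightarrow> 'k::field) \<Rightarrow> nat \<Rightarrow> 'k" where
  "qn q k = (\<Sum>j<k. q 1 1 ^ j)"

lemma tder1_X: "tder q 1 (X m) = (\<lambda>w. qn q m * X (m - 1) w)"
proof (induction m)
  case 0 then show ?case by (simp add: X_def tder_tone qn_def)
next
  case (Suc m)
  show ?case
  proof
    fix w
    have "tder q 1 (X (Suc m)) w = tmult (tgen 1) (tder q 1 (X m)) w + tmult (tder q 1 (tgen 1)) (tK q 1 (X m)) w"
      unfolding X_Suc by (rule leibniz)
    also have "tmult (tgen 1) (tder q 1 (X m)) w = qn q m * tmult (tgen 1) (X (m - 1)) w"
      unfolding Suc.IH by (rule tmult_cmultR)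
    also have "\<dots> = qn q m * X m w"
      by (cases m) (simp_all add: qn_def X_def)
    also have "tmult (tder q 1 (tgen 1)) (tK q 1 (X m)) w = q 1 1 ^ m * X m w"
      by (simp add: tder_tgen tmult_oneL tK_X)
    finally show "tder q 1 (X (Suc m)) w = qn q (Suc m) * X (Suc m - 1) w"
      by (simp add: qn_def algebra_simps)
  qed
qed

lemma tder2_X: assumes i: "i \<noteq> 1" shows "tder q i (X m) = (\<lambda>w. 0)"
proof (induction m)
  case 0 then show ?case by (simp add: X_def tder_tone)
next
  case (Suc m)
  show ?case
  proof
    fix w
    have "tder q i (X (Suc m)) w = tmult (tgen 1) (tder q i (X m)) w + tmult (tder q i (tgen 1)) (tK q i (X m)) w"
      unfolding X_Suc by (rule leibniz)
    then show "tder q i (X (Suc m)) w = 0" using i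
      unfolding Suc.IH tder_tgen by (simp add: tmult_zeroR tmult_zeroL)
  qed
qed

lemma yy_nil: "yy q k [] = 0"
  by (induction k) (simp_all add: tgen_def tsub_def tsmult_def M0)

lemma tK_fun: "tK q i f w = f w * (\<Prod>a\<leftarrow>w. q i a)"
  by (simp add: tK_def)

lemma tK_yy: "tK q i (yy q k) = (\<lambda>u. q i 1 ^ k * q i 2 * yy q k u)"
proof (induction k)
  case 0 then show ?case by (simp add: tK_tgen)
next
  case (Suc k)
  show ?case
  proof
    fix u
    have "tK q i (yy q (Suc k)) u = tK q i (tmult (tgen 1) (yy q k)) u - q 1 1 ^ k * q 1 2 * tK q i (tmult (yy q k) (tgen 1)) u"
      by (simp add: tK_fun tsub_def tsmult_def algebra_simps)
    also have "\<dots> = q i 1 ^ Suc k * q i 2 * yy q (Suc k) u"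
      unfolding tK_mult Suc.IH tK_tgen
      apply (simp only: tmult_cmultL tmult_cmultR)
      by (simp add: tsub_def tsmult_def algebra_simps)
    finally show "tK q i (yy q (Suc k)) u = q i 1 ^ Suc k * q i 2 * yy q (Suc k) u" .
  qed
qed

definition cc :: "(nat \<Rightarrow> nat \<Rightarrow> 'k::field) \<Rightarrow> nat \<Rightarrow> 'k" where
  "cc q k = (\<Prod>j<k. 1 - q 1 1 ^ j * q 1 2 * q 2 1)"

lemma tgen1_X: "tgen 1 = X 1" "tgen (Suc 0) = X (Suc 0)"
  by (rule ext, simp add: X_def tmult_oneR)+

lemma Xk_tgen: "tmult (X k) (tgen 1) u = X (Suc k) u"
  unfolding tgen1_X(1) X_mult by simp

lemma tder_yy: "tder q 1 (yy q k) = (\<lambda>u. 0) \<and> tder q 2 (yy q k) = (\<lambda>u. cc q k * X k u)"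
proof (induction k)
  case 0 then show ?case by (simp add: tder_tgen cc_def X_def)
next
  case (Suc k)
  have e: "tder q i (yy q (Suc k)) u = tder q i (tmult (tgen 1) (yy q k)) u - q 1 1 ^ k * q 1 2 * tder q i (tmult (yy q k) (tgen 1)) u" for i u
    by (simp add: tsub_def tsmult_def tder_sub tder_cmult)
  have "tder q 1 (yy q (Suc k)) u = 0" for u
    unfolding e leibniz using Suc.IH
    by (simp add: tder_tgen tK_yy tK_tgen tmult_zeroR tmult_zeroL tmult_oneL tmult_oneR)
  moreover have "tder q 2 (yy q (Suc k)) u = cc q (Suc k) * X (Suc k) u" for u
  proof -
    have "tder q 2 (yy q (Suc k)) u = cc q k * tmult (tgen 1) (X k) u - q 1 1 ^ k * q 1 2 * (cc q k * q 2 1 * tmult (X k) (tgen 1) u)"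
      unfolding e leibniz using Suc.IH
      by (simp add: tder_tgen tK_yy tK_tgen tmult_zeroR tmult_zeroL tmult_cmultL tmult_cmultR)
    also have "\<dots> = cc q (Suc k) * X (Suc k) u"
      unfolding Xk_tgen X_Suc[symmetric] by (simp add: cc_def algebra_simps)
    finally show ?thesis .
  qed
  ultimately show ?case by auto
qed


declare One_nat_def [simp del]

definition A :: "(nat \<Rightarrow> nat \<Rightarrow> 'k::field) \<Rightarrow> nat \<Rightarrow> nat \<Rightarrow> 'k tens" where
  "A q r m = tmult (yy q r) (X m)"
definition B :: "(nat \<Rightarrow> nat \<Rightarrow> 'k::field) \<Rightarrow> nat \<Rightarrow> nat \<Rightarrow> 'k tens" where
  "B q m s = tmult (X m) (yy q s)"
definition fall :: "(nat \<Rightarrow> nat \<Rightarrow> 'k::field) \<Rightarrow> nat \<Rightarrow> nat \<Rightarrow> 'k" where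
  "fall q m b = (\<Prod>j<b. qn q (m - j))"
definition W :: "(nat \<Rightarrow> nat \<Rightarrow> 'k::field) \<Rightarrow> nat \<Rightarrow> nat \<Rightarrow> nat \<Rightarrow> 'k tens" where
  "W q r s b = (\<lambda>u. cc q s * fall q s b * A q r (s - b) u
     + cc q r * q 2 1 ^ s * q 2 2 * fall q r b * (q 1 1 ^ s * q 1 2) ^ b * B q (r - b) s u)"
definition G :: "(nat \<Rightarrow> nat \<Rightarrow> 'k::field) \<Rightarrow> nat \<Rightarrow> nat \<Rightarrow> nat \<Rightarrow> 'k" where
  "G q r s b = fall q s b * q 2 1 ^ (s - b) + q 2 1 ^ s * q 2 2 * (q 1 1 ^ s * q 1 2) ^ b * fall q r b"

lemma fall_zero: "m < b \<Longrightarrow> fall q m b = 0"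
  unfolding fall_def by (rule prod_zero) (auto intro!: bexI[of _ m] simp: qn_def)

lemma fall_Suc: "fall q m (Suc b) = fall q m b * qn q (m - b)"
  by (simp add: fall_def)

lemma fall_0: "fall q m 0 = 1"
  by (simp add: fall_def)

lemma tder1_A: "tder q 1 (A q r m) = (\<lambda>u. qn q m * A q r (m - 1) u)"
  by (rule ext) (simp add: A_def leibniz tder1_X tder_yy tmult_cmultR tmult_zeroL)

lemma tder2_A: "tder q 2 (A q r m) = (\<lambda>u. cc q r * q 2 1 ^ m * X (r + m) u)"
  by (rule ext) (simp add: A_def leibniz tder2_X tder_yy tmult_cmultR tmult_cmultL tmult_zeroR tK_X X_mult)

lemma tder1_B: "tder q 1 (B q m s) = (\<lambda>u. qn q m * (q 1 1 ^ s * q 1 2) * B q (m - 1) s u)"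
  by (rule ext) (simp add: B_def leibniz tder1_X tder_yy tmult_cmultR tmult_cmultL tmult_zeroR tK_yy)

lemma tder2_B: "tder q 2 (B q m s) = (\<lambda>u. cc q s * X (m + s) u)"
  by (rule ext) (simp add: B_def leibniz tder2_X tder_yy tmult_cmultR tmult_zeroL X_mult)

lemma tder1_Y: "tder q 1 (tmult (yy q r) (yy q s)) = (\<lambda>u. 0)"
  by (rule ext) (simp add: leibniz tder_yy tmult_zeroR tmult_zeroL)

lemma tder2_Y: "tder q 2 (tmult (yy q r) (yy q s)) = W q r s 0"
  by (rule ext) (simp add: leibniz tder_yy tmult_cmultR tmult_cmultL tK_yy W_def fall_0 A_def B_def)

lemma Y_nil: "tmult (yy q r) (yy q s) [] = 0"
  by (simp add: M0 yy_nil)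

lemma W_nil: "W q r s b [] = 0"
  by (simp add: W_def A_def B_def M0 yy_nil)

lemma tder1_W: "tder q 1 (W q r s b) = W q r s (Suc b)"
  unfolding W_def
  apply (rule ext)
  apply (simp only: tder_add tder_cmult[where f="A q r (s - b)"] mult.assoc tder_cmult tder1_A tder1_B)
  apply (simp add: fall_Suc diff_Suc_eq_diff_pred)
  by (simp add: ac_simps)

lemma tder2_W: "tder q 2 (W q r s b) = (\<lambda>u. cc q s * fall q s b * (cc q r * q 2 1 ^ (s - b)) * X (r + (s - b)) u
  + cc q r * q 2 1 ^ s * q 2 2 * fall q r b * (q 1 1 ^ s * q 1 2) ^ b * cc q s * X (r - b + s) u)"
  unfolding W_def
  apply (rule ext)
  by (simp only: tder_add mult.assoc tder_cmult tder2_A tder2_B)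

definition Lw :: "(nat \<Rightarrow> nat \<Rightarrow> 'k::field) \<Rightarrow> nat list \<Rightarrow> 'k tens \<Rightarrow> 'k" where
  "Lw q w f = foldr (tder q) w f []"

lemma fold_sub: "foldr (tder q) w (\<lambda>u. f u - g u) = (\<lambda>u. foldr (tder q) w f u - foldr (tder q) w g u)"
  by (induction w) (simp_all add: tder_sub)
lemma fold_add: "foldr (tder q) w (\<lambda>u. f u + g u) = (\<lambda>u. foldr (tder q) w f u + foldr (tder q) w g u)"
  by (induction w) (simp_all add: tder_add)
lemma fold_cmult: "foldr (tder q) w (\<lambda>u. c * f u) = (\<lambda>u. c * foldr (tder q) w f u)"
  by (induction w) (simp_all add: tder_cmult)
lemma fold_zero: "foldr (tder q) w (\<lambda>u. 0) = (\<lambda>u. 0)"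
  by (induction w) (simp_all add: tder_zero)
lemma fold_sum: "foldr (tder q) w (\<lambda>u. \<Sum>p\<in>S. h p u) = (\<lambda>u. \<Sum>p\<in>S. foldr (tder q) w (h p) u)"
  by (induction w) (simp_all add: tder_sum)

lemma fold_zero': "foldr (tder q) w (\<lambda>u. 0) v = 0"
  by (simp add: fold_zero)

lemma Lw_snoc: "Lw q (w @ [i]) f = Lw q w (tder q i f)"
  by (simp add: Lw_def)
lemma Lw_nil: "Lw q [] f = f []"
  by (simp add: Lw_def)

lemma Lw_X: "Lw q w (X p) = (if w = replicate p 1 then fall q p p else 0)"
proof (induction w arbitrary: p rule: rev_induct)
  case Nil then show ?case by (simp add: Lw_nil X_nil fall_0)
next
  case (snoc i w)
  show ?case
  proof (cases "i = 1")
    case True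
    show ?thesis
    proof (cases p)
      case 0 then show ?thesis using True
        by (simp add: Lw_snoc tder1_X qn_def Lw_def fold_cmult fold_zero')
    next
      case (Suc p')
      have "Lw q (w @ [i]) (X p) = qn q p * Lw q w (X p')"
        using True Suc by (simp add: Lw_snoc tder1_X Lw_def fold_cmult)
      also have "\<dots> = (if w @ [i] = replicate p 1 then fall q p p else 0)"
      proof -
        have c: "(w @ [i] = replicate p 1) = (w = replicate p' 1)"
          using True Suc by (metis replicate_Suc replicate_append_same append1_eq_conv)
        have f: "fall q p p = qn q p * fall q p' p'"
          using Suc by (simp add: fall_def prod.lessThan_Suc_shift del: prod.lessThan_Suc)
        show ?thesis unfolding c f snoc.IH by simp
      qed
      finally show ?thesis .
    qed
  next
    case False
    then have "w @ [i] \<noteq> replicate p 1"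
      by (metis in_set_replicate last_in_set last_snoc snoc_eq_iff_butlast)
    then show ?thesis using False
      by (simp add: Lw_snoc tder2_X Lw_def fold_zero)
  qed
qed

lemma Lw_tder2W: "Lw q w (tder q 2 (W q r s b)) =
  (if w = replicate (length w) 1 \<and> length w + b = r + s then cc q r * cc q s * fall q (length w) (length w) * G q r s b else 0)"
proof -
  have "Lw q w (tder q 2 (W q r s b)) =
     cc q s * fall q s b * (cc q r * q 2 1 ^ (s - b)) * (if w = replicate (r + (s - b)) 1 then fall q (r + (s - b)) (r + (s - b)) else 0)
   + cc q r * q 2 1 ^ s * q 2 2 * fall q r b * (q 1 1 ^ s * q 1 2) ^ b * cc q s * (if w = replicate (r - b + s) 1 then fall q (r - b + s) (r - b + s) else 0)"
    unfolding tder2_W by (simp add: Lw_def fold_add fold_cmult Lw_X[unfolded Lw_def])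
  also have "\<dots> = (if w = replicate (length w) 1 \<and> length w + b = r + s then cc q r * cc q s * fall q (length w) (length w) * G q r s b else 0)"
  proof -
    show ?thesis
    proof (cases "w = replicate (length w) 1")
      case False
      then have "\<And>p. w \<noteq> replicate p 1" by auto
      then show ?thesis using False by simp
    next
      case True
      then have rep: "\<And>p. (w = replicate p (1::nat)) = (length w = p)"
        by (metis length_replicate)
      show ?thesis unfolding rep using True
        by (cases "b \<le> s"; cases "b \<le> r") (auto simp: fall_zero G_def algebra_simps)
    qed
  qed
  finally show ?thesis .
qed

lemma nz_Lw: "nichols_zero q f \<longleftrightarrow> (\<forall>w\<in>lists {1,2}. Lw q w f = 0)"
  by (simp add: nichols_zero_def Lw_def)

lemma nz_rec:
  assumes "f [] = 0" "nichols_zero q (tder q 1 f)" "nichols_zero q (tder q 2 f)"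
  shows "nichols_zero q f"
  unfolding nz_Lw
proof
  fix w :: "nat list" assume "w \<in> lists {1,2}"
  then show "Lw q w f = 0"
  proof (cases w rule: rev_exhaust)
    case Nil then show ?thesis using assms by (simp add: Lw_nil)
  next
    case (snoc v i)
    then show ?thesis using assms \<open>w \<in> lists {1,2}\<close> by (auto simp: Lw_snoc nz_Lw)
  qed
qed

lemma nz_zero: "nichols_zero q (\<lambda>u. 0)"
  by (simp add: nz_Lw Lw_def fold_zero)

lemma nz_seq:
  assumes "\<And>b. V b [] = 0" "\<And>b. tder q 1 (V b) = V (Suc b)" "\<And>b. nichols_zero q (tder q 2 (V b))"
  shows "nichols_zero q (V 0)"
proof -
  have "\<forall>b. Lw q w (V b) = 0" if "w \<in> lists {1,2}" for w
    using that
  proof (induction w rule: rev_induct)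
    case Nil then show ?case using assms by (simp add: Lw_nil)
  next
    case (snoc i w)
    then have w: "w \<in> lists {1,2}" and i: "i = 1 \<or> i = 2" by auto
    show ?case using i
    proof
      assume "i = 1" then show ?thesis using snoc.IH w assms by (simp add: Lw_snoc)
    next
      assume "i = 2" then show ?thesis using w assms by (simp add: Lw_snoc nz_Lw)
    qed
  qed
  then show ?thesis by (simp add: nz_Lw)
qed



lemma sum_single: "finite AA \<Longrightarrow> x \<in> AA \<Longrightarrow> (\<And>y. y \<in> AA \<Longrightarrow> y \<noteq> x \<Longrightarrow> f y = 0) \<Longrightarrow> sum f AA = f x"
  by (simp add: sum.remove sum.neutral)

lemma Lw_lin: "Lw q w (\<lambda>u. f u - c * g u) = Lw q w f - c * Lw q w g"
  by (simp add: Lw_def fold_sub fold_cmult)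

lemma Lw_comb: "Lw q w (\<lambda>u. f u - (\<Sum>p\<in>S. d p * g p u)) = Lw q w f - (\<Sum>p\<in>S. d p * Lw q w (g p))"
  by (simp add: Lw_def fold_sub fold_sum fold_cmult)

lemma pow_tder1_W: "(tder q 1 ^^ b) (W q r s 0) = W q r s b"
  by (induction b) (simp_all add: tder1_W)

lemma Lw_Y: "Lw q (replicate a 1 @ [2] @ replicate b 1 @ [2]) (tmult (yy q r) (yy q s)) =
  (if a + b = r + s then cc q r * cc q s * fall q a a * G q r s b else 0)"
proof -
  have "Lw q (replicate a 1 @ [2] @ replicate b 1 @ [2]) (tmult (yy q r) (yy q s))
      = Lw q (replicate a 1 @ [2]) (W q r s b)"
    by (simp add: Lw_def tder2_Y pow_tder1_W)
  also have "\<dots> = Lw q (replicate a 1) (tder q 2 (W q r s b))"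
    by (rule Lw_snoc)
  also have "\<dots> = (if a + b = r + s then cc q r * cc q s * fall q a a * G q r s b else 0)"
    by (simp add: Lw_tder2W)
  finally show ?thesis .
qed

theorem lemma4:
  fixes q :: "nat \<Rightarrow> nat \<Rightarrow> 'k::{alg_closed_field, field_char_0}"
    and l :: nat
  assumes q_nz: "\<And>i j. i \<in> {1,2} \<Longrightarrow> j \<in> {1,2} \<Longrightarrow> q i j \<noteq> 0"
    and q11: "q 1 1 \<noteq> 1" and q22: "q 2 2 \<noteq> 1"
    and h1: "\<not> nichols_zero q (tpow (tgen 1) (2 * l + 1))"
    and h2: "\<not> nichols_zero q (tpow (tgen 2) 2)"
    and h3: "\<not> nichols_zero q (yy q (l + 1))"
    and h4: "\<exists>(S :: (nat \<times> nat) set) (c :: nat \<Rightarrow> nat \<Rightarrow> 'k).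
               finite S \<and> (\<forall>(r, s)\<in>S. r \<le> s) \<and>
               nichols_zero q (\<lambda>w. tmult (yy q (l + 1)) (yy q l) w
                  - (\<Sum>(r, s)\<in>S. c r s * tmult (yy q r) (yy q s) w))"
  shows "q 1 1 ^ (l * (l + 1)) * (q 1 2 * q 2 1) ^ (l + 1) * q 2 2 = 1
    \<and> nichols_zero q (tsub (tmult (yy q (l + 1)) (yy q l))
         (tsmult (q 1 1 ^ (l * (l + 1)) * q 1 2 ^ (l + 1) * q 2 1 ^ l * q 2 2)
                 (tmult (yy q l) (yy q (l + 1)))))"
proof -
  define n where "n = 2 * l + 1"
  define lam where "lam = q 1 1 ^ (l * (l + 1)) * q 1 2 ^ (l + 1) * q 2 1 ^ l * q 2 2"
  have q21: "q 2 1 \<noteq> 0" using q_nz by simp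
  have fn: "fall q n n \<noteq> 0"
  proof
    assume z: "fall q n n = 0"
    have "nichols_zero q (X n)" unfolding nz_Lw by (simp add: Lw_X z)
    then show False using h1 by (simp add: X_def n_def)
  qed
  have qn_nz: "qn q k \<noteq> 0" if "1 \<le> k" "k \<le> n" for k
  proof
    assume z: "qn q k = 0"
    have "fall q n n = 0" unfolding fall_def
      by (rule prod_zero) (use that z in \<open>auto intro!: bexI[of _ "n - k"]\<close>)
    with fn show False by simp
  qed
  have fall_nz: "fall q m b \<noteq> 0" if "b \<le> m" "m \<le> n" for m b
    unfolding fall_def using that qn_nz by (auto simp: prod_zero_iff)
  have q22': "1 + q 2 2 \<noteq> 0"
  proof
    assume z: "1 + q 2 2 = 0"
    have x1: "tmult (tgen k) tone = tgen k" for k by (rule ext) (simp add: tmult_oneR)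
    have e: "tpow (tgen 2) 2 = (tmult (tgen 2) (tgen 2) :: 'k tens)"
      by (simp add: numeral_2_eq_2 x1)
    have d1: "tder q 1 (tmult (tgen 2) (tgen 2)) = (\<lambda>u. 0)"
      by (rule ext) (simp add: leibniz tder_tgen tmult_zeroR tmult_zeroL)
    have d2: "tder q 2 (tmult (tgen 2) (tgen 2)) = (\<lambda>u. 0)"
    proof
      fix u
      have "tder q 2 (tmult (tgen 2) (tgen 2)) u = (1 + q 2 2) * tgen 2 u"
        by (simp add: leibniz tder_tgen tmult_oneR tmult_oneL tK_tgen algebra_simps)
      then show "tder q 2 (tmult (tgen 2) (tgen 2)) u = 0" using z by simp
    qed
    have "nichols_zero q (tmult (tgen 2) (tgen 2))"
      by (rule nz_rec) (simp_all add: M0 tgen_nil d1 d2 nz_zero)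
    then show False using h2 e by simp
  qed
  have c1: "cc q (l + 1) \<noteq> 0"
  proof
    assume z: "cc q (l + 1) = 0"
    have "nichols_zero q (yy q (l + 1))"
      by (rule nz_rec) (simp_all add: yy_nil tder_yy z nz_zero)
    then show False using h3 by simp
  qed
  have c0: "cc q l \<noteq> 0" using c1 by (simp add: cc_def)
  obtain S and c :: "nat \<Rightarrow> nat \<Rightarrow> 'k" where fS: "finite S" and Sle: "\<forall>(r, s)\<in>S. r \<le> s"
    and nzF: "nichols_zero q (\<lambda>w. tmult (yy q (l + 1)) (yy q l) w
                  - (\<Sum>(r, s)\<in>S. c r s * tmult (yy q r) (yy q s) w))"
    using h4 by blast
  have nzF': "nichols_zero q (\<lambda>u. tmult (yy q (l + 1)) (yy q l) u
       - (\<Sum>p\<in>S. c (fst p) (snd p) * tmult (yy q (fst p)) (yy q (snd p)) u))"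
    using nzF by (simp add: case_prod_unfold)
  define H where "H r s b = (if r + s = n then cc q r * cc q s * G q r s b else 0)" for r s b
  define D where "D s = (if (n - s, s) \<in> S then c (n - s) s else 0) * cc q (n - s) * cc q s" for s
  have E0: "cc q (l + 1) * cc q l * G q (l + 1) l b = (\<Sum>p\<in>S. c (fst p) (snd p) * H (fst p) (snd p) b)"
    if b: "b \<le> n" for b
  proof -
    define a where "a = n - b"
    have ab: "a + b = n" using b by (simp add: a_def)
    have w: "replicate a 1 @ [2] @ replicate b 1 @ [2] \<in> lists {1, 2}" by auto
    have "Lw q (replicate a 1 @ [2] @ replicate b 1 @ [2]) (\<lambda>u. tmult (yy q (l + 1)) (yy q l) u
       - (\<Sum>p\<in>S. c (fst p) (snd p) * tmult (yy q (fst p)) (yy q (snd p)) u)) = 0"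
      using nzF' w unfolding nz_Lw by blast
    moreover have Lp: "Lw q (replicate a 1 @ [2] @ replicate b 1 @ [2]) (tmult (yy q r) (yy q s)) = fall q a a * H r s b" for r s
      unfolding Lw_Y H_def using ab by (auto simp: mult_ac)
    ultimately have "fall q a a * H (l + 1) l b - (\<Sum>p\<in>S. c (fst p) (snd p) * (fall q a a * H (fst p) (snd p) b)) = 0"
      unfolding Lw_comb Lp by simp
    then have "fall q a a * (H (l + 1) l b - (\<Sum>p\<in>S. c (fst p) (snd p) * H (fst p) (snd p) b)) = 0"
      by (simp add: right_diff_distrib sum_distrib_left algebra_simps)
    moreover have "fall q a a \<noteq> 0" using fall_nz[of a a] ab by simp
    ultimately have "H (l + 1) l b = (\<Sum>p\<in>S. c (fst p) (snd p) * H (fst p) (snd p) b)" by simp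
    then show ?thesis by (simp add: H_def n_def)
  qed
  have reidx: "(\<Sum>p\<in>S. c (fst p) (snd p) * H (fst p) (snd p) b) = (\<Sum>s\<in>{l+1..n}. D s * G q (n - s) s b)" for b
  proof -
    define f where "f p = c (fst p) (snd p) * H (fst p) (snd p) b" for p
    define T where "T = (\<lambda>s. (n - s, s)) ` {l+1..n}"
    have "(\<Sum>p\<in>S. f p) = (\<Sum>p\<in>S \<inter> T. f p)"
    proof (rule sum.mono_neutral_right)
      show "finite S" by (rule fS)
      show "S \<inter> T \<subseteq> S" by blast
      show "\<forall>p\<in>S - S \<inter> T. f p = 0"
      proof
        fix p assume p: "p \<in> S - S \<inter> T"
        obtain r s where rs: "p = (r, s)" by (cases p)
        have "r \<le> s" using p rs Sle by auto
        have "r + s \<noteq> n"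
        proof
          assume e: "r + s = n"
          then have "p \<in> T" unfolding T_def rs using \<open>r \<le> s\<close> by (auto simp: n_def image_iff intro!: bexI[of _ s])
          then show False using p by blast
        qed
        then show "f p = 0" by (simp add: f_def H_def rs)
      qed
    qed
    also have "\<dots> = (\<Sum>p\<in>T. if p \<in> S then f p else 0)"
      by (subst Int_commute, rule sum.inter_restrict) (simp add: T_def)
    also have "\<dots> = (\<Sum>s\<in>{l+1..n}. (if (n - s, s) \<in> S then f (n - s, s) else 0))"
      unfolding T_def by (subst sum.reindex) (auto simp: inj_on_def)
    also have "\<dots> = (\<Sum>s\<in>{l+1..n}. D s * G q (n - s) s b)"
      by (rule sum.cong) (auto simp: f_def D_def H_def)
    finally show ?thesis by (simp add: f_def)
  qed
  have E: "cc q (l + 1) * cc q l * G q (l + 1) l b = (\<Sum>s\<in>{l+1..n}. D s * G q (n - s) s b)"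
    if "b \<le> n" for b
    using E0[OF that] reidx by simp
  have Dz: "D s = 0" if "l + 2 \<le> s" "s \<le> n" for s
    using that
  proof (induction "n - s" arbitrary: s rule: less_induct)
    case less
    have lhs: "G q (l + 1) l s = 0"
      using less.prems by (simp add: G_def fall_zero)
    have "(\<Sum>s'\<in>{l+1..n}. D s' * G q (n - s') s' s) = D s * G q (n - s) s s"
    proof (rule sum_single)
      show "finite {l+1..n}" by simp
      show "s \<in> {l+1..n}" using less.prems by simp
      fix y assume y: "y \<in> {l+1..n}" "y \<noteq> s"
      show "D y * G q (n - y) y s = 0"
      proof (cases "y < s")
        case True
        have "n - y < s" using y less.prems unfolding n_def atLeastAtMost_iff by arith
        then show ?thesis using True by (simp add: G_def fall_zero)
      next
        case False
        then have "D y = 0" using y less.prems by (intro less.hyps) auto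
        then show ?thesis by simp
      qed
    qed
    also have "G q (n - s) s s = fall q s s"
      using less.prems by (simp add: G_def fall_zero n_def)
    finally have "D s * fall q s s = 0" using E[of s] less.prems lhs by simp
    moreover have "fall q s s \<noteq> 0" using fall_nz less.prems by simp
    ultimately show ?case by simp
  qed
  have E1: "cc q (l + 1) * cc q l * G q (l + 1) l b = D (l + 1) * G q l (l + 1) b"
    if "b \<le> l + 1" for b
  proof -
    have "(\<Sum>s\<in>{l+1..n}. D s * G q (n - s) s b) = D (l + 1) * G q (n - (l + 1)) (l + 1) b"
      by (rule sum_single) (auto simp: n_def intro!: Dz)
    then show ?thesis using E[of b] that by (simp add: n_def)
  qed
  have lamG: "(q 1 1 ^ l * q 1 2) ^ (l + 1) * q 2 1 ^ l * q 2 2 = lam"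
    by (simp add: lam_def power_mult_distrib power_mult[symmetric] mult_ac)
  have Dl: "D (l + 1) = cc q (l + 1) * cc q l * lam"
  proof -
    have g1: "G q (l + 1) l (l + 1) = lam * fall q (l + 1) (l + 1)"
      by (simp add: G_def fall_zero lamG[symmetric] mult_ac)
    have g2: "G q l (l + 1) (l + 1) = fall q (l + 1) (l + 1)"
      by (simp add: G_def fall_zero)
    have "fall q (l + 1) (l + 1) \<noteq> 0" using fall_nz by (simp add: n_def)
    then show ?thesis using E1[of "l + 1"] g1 g2 by (simp add: mult_ac)
  qed
  have Gall: "G q (l + 1) l b = lam * G q l (l + 1) b" for b
  proof (cases "b \<le> l + 1")
    case True
    then show ?thesis using E1[of b] Dl c0 c1 by (simp add: mult_ac)
  next
    case False
    then show ?thesis by (simp add: G_def fall_zero)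
  qed
  have part1: "q 1 1 ^ (l * (l + 1)) * (q 1 2 * q 2 1) ^ (l + 1) * q 2 2 = 1"
  proof -
    have "q 2 1 ^ l * (1 + q 2 2) = (lam * q 2 1 ^ (l + 1)) * (1 + q 2 2)"
      using Gall[of 0] by (simp add: G_def fall_0 algebra_simps)
    then have "q 2 1 ^ l = lam * q 2 1 ^ (l + 1)" using q22' by (metis mult_right_cancel)
    moreover have pw: "q 2 1 ^ (l + 1) = q 2 1 ^ l * q 2 1" by (simp add: power_add)
    ultimately have "q 2 1 ^ l * 1 = q 2 1 ^ l * (lam * q 2 1)" by (metis mult.assoc mult.commute mult_1_right)
    then have "lam * q 2 1 = 1" using q21 by (metis mult_left_cancel power_not_zero)
    then show ?thesis by (simp add: lam_def power_mult_distrib power_add mult_ac)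
  qed
  define V where "V b = (\<lambda>u. W q (l + 1) l b u - lam * W q l (l + 1) b u)" for b
  have V0: "nichols_zero q (V 0)"
  proof (rule nz_seq)
    fix b
    show "V b [] = 0" by (simp add: V_def W_nil)
    show "tder q 1 (V b) = V (Suc b)"
      by (rule ext) (simp add: V_def tder_sub tder_cmult tder1_W)
    have e: "tder q 2 (V b) = (\<lambda>u. tder q 2 (W q (l + 1) l b) u - lam * tder q 2 (W q l (l + 1) b) u)"
      by (rule ext) (simp add: V_def tder_sub tder_cmult)
    show "nichols_zero q (tder q 2 (V b))"
      unfolding nz_Lw e Lw_lin Lw_tder2W using Gall by (simp add: mult_ac)
  qed
  have part2: "nichols_zero q (tsub (tmult (yy q (l + 1)) (yy q l)) (tsmult lam (tmult (yy q l) (yy q (l + 1)))))"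
  proof (rule nz_rec)
    show "tsub (tmult (yy q (l + 1)) (yy q l)) (tsmult lam (tmult (yy q l) (yy q (l + 1)))) [] = 0"
      by (simp add: tsub_def tsmult_def Y_nil)
    have "tder q 1 (tsub (tmult (yy q (l + 1)) (yy q l)) (tsmult lam (tmult (yy q l) (yy q (l + 1))))) = (\<lambda>u. 0)"
      by (rule ext) (simp add: tsub_def tsmult_def tder_sub tder_cmult tder1_Y)
    then show "nichols_zero q (tder q 1 (tsub (tmult (yy q (l + 1)) (yy q l)) (tsmult lam (tmult (yy q l) (yy q (l + 1))))))"
      by (simp add: nz_zero)
    have "tder q 2 (tsub (tmult (yy q (l + 1)) (yy q l)) (tsmult lam (tmult (yy q l) (yy q (l + 1))))) = V 0"
      by (rule ext) (simp add: tsub_def tsmult_def tder_sub tder_cmult tder2_Y V_def)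
    then show "nichols_zero q (tder q 2 (tsub (tmult (yy q (l + 1)) (yy q l)) (tsmult lam (tmult (yy q l) (yy q (l + 1))))))"
      using V0 by simp
  qed
  show ?thesis using part1 part2 by (simp add: lam_def)
qed

end
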